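(* Let $T\in(\mathbb{C}^n)^{\otimes3}$ be a symmetric tensor which is $r$-diagonalisable. Then for all matrices $U\in M_{r,n}(\mathbb{C})$ whose rows $u_1,\dots,u_r$ are linearly independent and satisfy $T=\sum_{i=1}^ru_i^{\otimes3}$, the quantity $\|U\|_F^2+\|U^\dagger\|_F^2$ is the same.
   Context: $T$ is $r$-diagonalisable if $T=\sum_{i=1}^ru_i^{\otimes3}$ for some linearly independent $u_1,\dots,u_r\in\mathbb{C}^n$. $U^\dagger$ denotes the Moore–Penrose pseudoinverse of $U$. *)

theory Defs
  imports "HOL-Analysis.Analysis"
begin

text \<open>Order-3 tensors on C^n are functions of three indices of the finite type 'n.
  A matrix U in M_{r,n}(C) is an element of complex^'n^'r; its i-th row is U $ i.\<close>

type_synonym 'n tensor3 = "'n \<Rightarrow> 'n \<Rightarrow> 'n \<Rightarrow> complex"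

definition cube :: "complex ^ 'n \<Rightarrow> 'n tensor3" where
  "cube u = (\<lambda>a b c. u $ a * u $ b * u $ c)"

definition symmetric_tensor :: "'n tensor3 \<Rightarrow> bool" where
  "symmetric_tensor T \<longleftrightarrow>
     (\<forall>a b c. T a b c = T b a c \<and> T a b c = T a c b \<and> T a b c = T c b a)"

definition clin_indep_family :: "'i set \<Rightarrow> ('i \<Rightarrow> complex ^ 'n) \<Rightarrow> bool" where
  "clin_indep_family I u \<longleftrightarrow>
     (\<forall>c :: 'i \<Rightarrow> complex. (\<Sum>i\<in>I. (\<chi> k. c i * u i $ k)) = 0 \<longrightarrow> (\<forall>i\<in>I. c i = 0))"

definition r_diagonalisable :: "nat \<Rightarrow> 'n::finite tensor3 \<Rightarrow> bool" where
  "r_diagonalisable r T \<longleftrightarrow>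
     (\<exists>u :: nat \<Rightarrow> complex ^ 'n. clin_indep_family {..<r} u \<and>
        T = (\<lambda>a b c. \<Sum>i<r. cube (u i) a b c))"

definition ctrans :: "complex ^ 'n ^ 'm \<Rightarrow> complex ^ 'm ^ 'n" where
  "ctrans A = (\<chi> i j. cnj (A $ j $ i))"

definition penrose :: "complex ^ 'n ^ 'm \<Rightarrow> complex ^ 'm ^ 'n \<Rightarrow> bool" where
  "penrose A X \<longleftrightarrow> A ** X ** A = A \<and> X ** A ** X = X \<and>
     ctrans (A ** X) = A ** X \<and> ctrans (X ** A) = X ** A"

definition pinv :: "complex ^ 'n ^ 'm \<Rightarrow> complex ^ 'm ^ 'n" where
  "pinv A = (THE X. penrose A X)"

definition frob_sq :: "complex ^ 'n ^ 'm \<Rightarrow> real" where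
  "frob_sq A = (\<Sum>i\<in>UNIV. \<Sum>j\<in>UNIV. (cmod (A $ i $ j))\<^sup>2)"

end

theory Submission
  imports Defs
begin


lemma swap4: "(\<Sum>a\<in>A. \<Sum>b\<in>B. \<Sum>c\<in>C. \<Sum>i\<in>I. f a b c i) = (\<Sum>i\<in>I. \<Sum>a\<in>A. \<Sum>b\<in>B. \<Sum>c\<in>C. f a b c i)"
proof -
  have "(\<Sum>a\<in>A. \<Sum>b\<in>B. \<Sum>c\<in>C. \<Sum>i\<in>I. f a b c i) = (\<Sum>a\<in>A. \<Sum>b\<in>B. \<Sum>i\<in>I. \<Sum>c\<in>C. f a b c i)"
    by (intro sum.cong refl) (rule sum.swap)
  also have "\<dots> = (\<Sum>a\<in>A. \<Sum>i\<in>I. \<Sum>b\<in>B. \<Sum>c\<in>C. f a b c i)"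
    by (intro sum.cong refl) (rule sum.swap)
  also have "\<dots> = (\<Sum>i\<in>I. \<Sum>a\<in>A. \<Sum>b\<in>B. \<Sum>c\<in>C. f a b c i)"
    by (rule sum.swap)
  finally show ?thesis .
qed

lemma swap3: "(\<Sum>b\<in>B. \<Sum>c\<in>C. \<Sum>i\<in>I. f b c i) = (\<Sum>i\<in>I. \<Sum>b\<in>B. \<Sum>c\<in>C. f b c i)"
proof -
  have "(\<Sum>b\<in>B. \<Sum>c\<in>C. \<Sum>i\<in>I. f b c i) = (\<Sum>b\<in>B. \<Sum>i\<in>I. \<Sum>c\<in>C. f b c i)"
    by (intro sum.cong refl) (rule sum.swap)
  also have "\<dots> = (\<Sum>i\<in>I. \<Sum>b\<in>B. \<Sum>c\<in>C. f b c i)"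
    by (rule sum.swap)
  finally show ?thesis .
qed

lemma rev3: "(\<Sum>a\<in>A. \<Sum>b\<in>B. \<Sum>c\<in>C. f a b c) = (\<Sum>c\<in>C. \<Sum>b\<in>B. \<Sum>a\<in>A. f a b c)"
proof -
  have "(\<Sum>a\<in>A. \<Sum>b\<in>B. \<Sum>c\<in>C. f a b c) = (\<Sum>a\<in>A. \<Sum>c\<in>C. \<Sum>b\<in>B. f a b c)"
    by (intro sum.cong refl) (rule sum.swap)
  also have "\<dots> = (\<Sum>c\<in>C. \<Sum>a\<in>A. \<Sum>b\<in>B. f a b c)" by (rule sum.swap)
  also have "\<dots> = (\<Sum>c\<in>C. \<Sum>b\<in>B. \<Sum>a\<in>A. f a b c)"
    by (intro sum.cong refl) (rule sum.swap)
  finally show ?thesis .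
qed

lemma indep_iff: "clin_indep_family UNIV u \<longleftrightarrow> (\<forall>c. (\<Sum>i\<in>UNIV. c i *s u i) = 0 \<longrightarrow> (\<forall>i. c i = 0))"
  unfolding clin_indep_family_def vector_scalar_mult_def by simp

lemma contr3:
  fixes U :: "complex ^ 'n::finite ^ 'r::finite"
  shows "(\<Sum>a\<in>UNIV. \<Sum>b\<in>UNIV. \<Sum>c\<in>UNIV. (\<Sum>i\<in>UNIV. cube (U$i) a b c) * x$a * y$b * z$c)
     = (\<Sum>i\<in>UNIV. (U *v x)$i * (U *v y)$i * (U *v z)$i)"
proof -
  have "(\<Sum>a\<in>UNIV. \<Sum>b\<in>UNIV. \<Sum>c\<in>UNIV. (\<Sum>i\<in>UNIV. cube (U$i) a b c) * x$a * y$b * z$c)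
     = (\<Sum>a\<in>UNIV. \<Sum>b\<in>UNIV. \<Sum>c\<in>UNIV. \<Sum>i\<in>UNIV. (U$i$a * x$a) * (U$i$b * y$b) * (U$i$c * z$c))"
    unfolding cube_def by (simp add: sum_distrib_left sum_distrib_right mult_ac)
  also have "\<dots> = (\<Sum>i\<in>UNIV. \<Sum>a\<in>UNIV. \<Sum>b\<in>UNIV. \<Sum>c\<in>UNIV. (U$i$a * x$a) * (U$i$b * y$b) * (U$i$c * z$c))"
    by (rule swap4)
  also have "\<dots> = (\<Sum>i\<in>UNIV. (U *v x)$i * (U *v y)$i * (U *v z)$i)"
    unfolding matrix_vector_mult_def
    apply (simp add: sum_distrib_left sum_distrib_right)
    apply (rule sum.cong[OF refl])
    by (rule rev3)
  finally show ?thesis .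
qed

lemma contr2:
  fixes U :: "complex ^ 'n::finite ^ 'r::finite"
  shows "(\<chi> a. \<Sum>b\<in>UNIV. \<Sum>c\<in>UNIV. (\<Sum>i\<in>UNIV. cube (U$i) a b c) * y$b * z$c)
     = (\<Sum>i\<in>UNIV. ((U *v y)$i * (U *v z)$i) *s U$i)"
  unfolding vec_eq_iff
proof
  fix a
  have "(\<Sum>b\<in>UNIV. \<Sum>c\<in>UNIV. (\<Sum>i\<in>UNIV. cube (U$i) a b c) * y$b * z$c)
     = (\<Sum>b\<in>UNIV. \<Sum>c\<in>UNIV. \<Sum>i\<in>UNIV. (U$i$b * y$b) * (U$i$c * z$c) * U$i$a)"
    unfolding cube_def by (simp add: sum_distrib_left sum_distrib_right mult_ac)
  also have "\<dots> = (\<Sum>i\<in>UNIV. \<Sum>b\<in>UNIV. \<Sum>c\<in>UNIV. (U$i$b * y$b) * (U$i$c * z$c) * U$i$a)"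
    by (rule swap3)
  also have "\<dots> = (\<Sum>i\<in>UNIV. ((U *v y)$i * (U *v z)$i) * U$i$a)"
    unfolding matrix_vector_mult_def
    apply (simp add: sum_distrib_left sum_distrib_right)
    apply (rule sum.cong[OF refl])
    by (rule sum.swap)
  finally show "(\<chi> a. \<Sum>b\<in>UNIV. \<Sum>c\<in>UNIV. (\<Sum>i\<in>UNIV. cube (U$i) a b c) * y$b * z$c) $ a
     = (\<Sum>i\<in>UNIV. ((U *v y)$i * (U *v z)$i) *s U$i) $ a"
    by (simp add: sum_component)
qed

lemma if01_mult: "(if P then 1 else 0) * (x::'a::semiring_1) = (if P then x else 0)"
  "x * (if P then 1 else 0) = (if P then x else 0)"
  "(if P then x else 0) * y = (if P then x * y else 0)"
  "y * (if P then x else 0) = (if P then y * x else 0)" by auto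

lemma if_smult: "(if P then x else 0) *s (v::'a::semiring_1^'n) = (if P then x *s v else 0)" by auto

lemma decomp_unique:
  fixes U V :: "complex ^ 'n::finite ^ 'r::finite"
  assumes iU: "clin_indep_family UNIV (\<lambda>i. U $ i)" and iV: "clin_indep_family UNIV (\<lambda>i. V $ i)"
    and Hp: "\<And>a b c. (\<Sum>i\<in>UNIV. cube (U $ i) a b c) = (\<Sum>i\<in>UNIV. cube (V $ i) a b c)"
  shows "\<exists>\<sigma> \<beta>. bij \<sigma> \<and> (\<forall>i. cmod (\<beta> i) = 1) \<and> (\<forall>i. U $ i = \<beta> i *s V $ (\<sigma> i))"
proof -
  from iU have iU': "\<And>c. (\<Sum>i\<in>UNIV. c i *s U$i) = 0 \<Longrightarrow> (\<forall>i. c i = 0)" by (simp add: indep_iff)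
  from iV have iV': "\<And>c. (\<Sum>i\<in>UNIV. c i *s V$i) = 0 \<Longrightarrow> (\<forall>i. c i = 0)" by (simp add: indep_iff)
  have "\<exists>W. U ** W = mat 1" using iU' unfolding matrix_right_invertible_independent_rows
    by (simp add: row_def)
  then obtain W where W: "U ** W = mat 1" by blast
  have "\<exists>W. V ** W = mat 1" using iV' unfolding matrix_right_invertible_independent_rows
    by (simp add: row_def)
  then obtain W' where W': "V ** W' = mat 1" by blast
  have eU: "(U *v column a W)$i = (if i = a then 1 else 0)" for a i
  proof -
    have "(U ** W)$i$a = (if i = a then 1 else 0)" using W by (simp add: mat_def)
    thus ?thesis by (simp add: matrix_matrix_mult_def matrix_vector_mult_def column_def)
  qed
  have eV: "(V *v column a W')$i = (if i = a then 1 else 0)" for a i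
  proof -
    have "(V ** W')$i$a = (if i = a then 1 else 0)" using W' by (simp add: mat_def)
    thus ?thesis by (simp add: matrix_matrix_mult_def matrix_vector_mult_def column_def)
  qed
  define B where "B j a = (V *v column a W)$j" for j a
  define C where "C a k = (U *v column k W')$a" for a k
  have T3: "(\<Sum>i\<in>UNIV. (U *v x)$i * (U *v y)$i * (U *v z)$i) = (\<Sum>i\<in>UNIV. (V *v x)$i * (V *v y)$i * (V *v z)$i)" for x y z
    using contr3[of U x y z] contr3[of V x y z] Hp by simp
  have T2: "(\<Sum>i\<in>UNIV. ((U *v y)$i * (U *v z)$i) *s U$i) = (\<Sum>i\<in>UNIV. ((V *v y)$i * (V *v z)$i) *s V$i)" for y z
    using contr2[of U y z] contr2[of V y z] Hp by simp
  have F1: "C a k * C a l = (if k = l then B k a else 0)" for a k l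
    using T3[of "column a W" "column k W'" "column l W'"] by (simp add: eU eV B_def C_def if01_mult)
  have F2: "U$a = (\<Sum>j\<in>UNIV. (B j a)^2 *s V$j)" for a
    using T2[of "column a W" "column a W"] by (simp add: eU B_def power2_eq_square if01_mult if_smult)
  have F3: "V$b = (\<Sum>i\<in>UNIV. (C i b)^2 *s U$i)" for b
    using T2[of "column b W'" "column b W'"] by (simp add: eV C_def power2_eq_square if01_mult if_smult)
  have BC: "B k a = (C a k)^2" for a k
    using F1[of a k k] by (simp add: power2_eq_square)
  have single: "(\<Sum>i\<in>UNIV. (if i = a then 1 else 0) *s X$i) = X$a" for a and X :: "complex^'n^'r"
    by (simp add: if_smult)
  have nz: "\<exists>k. C a k \<noteq> 0" for a
  proof (rule ccontr)
    assume "\<not> (\<exists>k. C a k \<noteq> 0)"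
    hence "U$a = 0" using F2[of a] BC by simp
    hence "(\<Sum>i\<in>UNIV. (if i = a then 1 else 0) *s U$i) = 0" using single[of a U] by simp
    from spec[OF iU'[OF this], of a] show False by simp
  qed
  define \<sigma> where "\<sigma> a = (SOME k. C a k \<noteq> 0)" for a
  have snz: "C a (\<sigma> a) \<noteq> 0" for a
    unfolding \<sigma>_def using nz[of a] by (rule someI_ex)
  have zero: "k \<noteq> \<sigma> a \<Longrightarrow> C a k = 0" for a k
    using F1[of a k "\<sigma> a"] snz[of a] by auto
  have Ua: "U$a = (C a (\<sigma> a))^4 *s V$(\<sigma> a)" for a
  proof -
    have "U$a = (\<Sum>j\<in>UNIV. (if j = \<sigma> a then (C a (\<sigma> a))^4 *s V$j else 0))"
      unfolding F2[of a] BC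
      by (rule sum.cong) (auto simp: zero power_mult[symmetric])
    thus ?thesis by simp
  qed
  have inj: "inj \<sigma>"
  proof (rule injI, rule ccontr)
    fix a a' assume eq: "\<sigma> a = \<sigma> a'" and ne: "a \<noteq> a'"
    define p where "p = (C a (\<sigma> a))^4"
    define q where "q = (C a' (\<sigma> a'))^4"
    have pq: "p \<noteq> 0" "q \<noteq> 0" using snz unfolding p_def q_def by auto
    define c where "c i = (if i = a then q else 0) + (if i = a' then -p else 0)" for i
    have "(\<Sum>i\<in>UNIV. c i *s U$i) = (\<Sum>i\<in>UNIV. (if i = a then q *s U$i else 0)) + (\<Sum>i\<in>UNIV. (if i = a' then (-p) *s U$i else 0))"
      unfolding c_def vector_sadd_rdistrib sum.distrib if_smult by simp
    also have "\<dots> = q *s U$a - p *s U$a'" by simp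
    also have "\<dots> = 0" using Ua[of a] Ua[of a'] eq unfolding p_def q_def
      by (simp add: vector_smult_assoc mult.commute)
    finally have "c a = 0" using iU' by blast
    thus False using ne pq unfolding c_def by simp
  qed
  hence bij: "bij \<sigma>" using finite_UNIV_inj_surj[of \<sigma>] by (simp add: bij_def)
  have md: "cmod (C a (\<sigma> a)) = 1" for a
  proof -
    define b where "b = \<sigma> a"
    have "V$b = (\<Sum>i\<in>UNIV. (if i = a then (C a b)^2 *s U$a else 0))"
      unfolding F3[of b]
    proof (rule sum.cong)
      fix i
      show "(C i b)\<^sup>2 *s U $ i = (if i = a then (C a b)\<^sup>2 *s U $ a else 0)"
      proof (cases "i = a")
        case False
        hence "b \<noteq> \<sigma> i" using inj unfolding b_def by (metis injD)
        thus ?thesis using zero[of b i] False by simp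
      qed simp
    qed simp
    also have "\<dots> = (C a b)^6 *s V$b" using Ua[of a]
      by (simp add: b_def vector_smult_assoc power_add[symmetric])
    finally have eq6: "V$b = (C a b)^6 *s V$b" .
    have "(1 - (C a b)^6) *s V$b = V$b - (C a b)^6 *s V$b" by (simp add: vector_sub_rdistrib)
    hence "(1 - (C a b)^6) *s V$b = 0" using eq6 by (metis diff_self)
    moreover have "V$b \<noteq> 0"
    proof
      assume "V$b = 0"
      hence "(\<Sum>i\<in>UNIV. (if i = b then 1 else 0) *s V$i) = 0" using single[of b V] by simp
      from spec[OF iV'[OF this], of b] show False by simp
    qed
    ultimately have "1 - (C a b)^6 = 0" using vector_mul_eq_0 by blast
    hence "(C a b)^6 = 1" by simp
    hence "cmod (C a b) ^ 6 = 1" by (metis norm_power norm_one)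
    hence "cmod (C a b) = 1" using power_eq_imp_eq_base[of "cmod (C a b)" 6 1] by simp
    thus ?thesis unfolding b_def .
  qed
  show ?thesis
  proof (intro exI conjI allI)
    show "bij \<sigma>" by (rule bij)
    show "cmod ((C i (\<sigma> i))^4) = 1" for i by (simp add: norm_power md)
    show "U $ i = (C i (\<sigma> i))^4 *s V $ (\<sigma> i)" for i by (rule Ua)
  qed
qed



lemma ctrans_mult: "ctrans (A ** B) = ctrans B ** ctrans (A :: complex^'n^'m)"
  by (simp add: vec_eq_iff ctrans_def matrix_matrix_mult_def cnj_sum mult.commute)

lemma ctrans_ctrans[simp]: "ctrans (ctrans A) = A"
  by (simp add: vec_eq_iff ctrans_def)

lemma ext_r: "A ** B = C \<Longrightarrow> A ** (B ** M) = C ** M"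
  by (metis matrix_mul_assoc)

lemma penrose_unique:
  fixes A :: "complex^'n^'m"
  assumes "penrose A X" "penrose A Y"
  shows "X = Y"
proof -
  have x1: "A ** X ** A = A" and x2: "X ** A ** X = X" and x3: "ctrans (A ** X) = A ** X"
    and x4: "ctrans (X ** A) = X ** A" using assms(1) unfolding penrose_def by auto
  have y1: "A ** Y ** A = A" and y2: "Y ** A ** Y = Y" and y3: "ctrans (A ** Y) = A ** Y"
    and y4: "ctrans (Y ** A) = Y ** A" using assms(2) unfolding penrose_def by auto
  have c1: "ctrans A = ctrans A ** (A ** Y)"
  proof -
    have "ctrans A = ctrans (A ** Y ** A)" using y1 by simp
    also have "\<dots> = ctrans A ** ctrans (A ** Y)" by (simp add: ctrans_mult)
    finally show ?thesis using y3 by simp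
  qed
  have c2: "ctrans A = (X ** A) ** ctrans A"
  proof -
    have "ctrans A = ctrans (A ** (X ** A))" using x1 by (simp add: matrix_mul_assoc)
    also have "\<dots> = ctrans (X ** A) ** ctrans A" by (simp add: ctrans_mult)
    finally show ?thesis using x4 by simp
  qed
  have "X = X ** (A ** X)" using x2 by (simp add: matrix_mul_assoc)
  also have "\<dots> = X ** ctrans (A ** X)" using x3 by simp
  also have "\<dots> = X ** ctrans X ** ctrans A" by (simp add: ctrans_mult matrix_mul_assoc)
  also have "\<dots> = X ** ctrans X ** (ctrans A ** (A ** Y))" using c1 by simp
  also have "\<dots> = X ** (ctrans X ** ctrans A) ** A ** Y" by (simp add: matrix_mul_assoc)
  also have "\<dots> = X ** ctrans (A ** X) ** A ** Y" by (simp add: ctrans_mult)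
  also have "\<dots> = (X ** A ** X) ** A ** Y" using x3 by (simp add: matrix_mul_assoc)
  also have "\<dots> = X ** A ** Y" using x2 by simp
  finally have X: "X = X ** A ** Y" .
  have "Y = (Y ** A) ** Y" using y2 by simp
  also have "\<dots> = ctrans (Y ** A) ** Y" using y4 by simp
  also have "\<dots> = ctrans A ** ctrans Y ** Y" by (simp add: ctrans_mult)
  also have "\<dots> = (X ** A) ** ctrans A ** ctrans Y ** Y" using c2 by simp
  also have "\<dots> = (X ** A) ** ctrans (Y ** A) ** Y" by (simp add: ctrans_mult matrix_mul_assoc)
  also have "\<dots> = X ** A ** (Y ** A ** Y)" using y4 by (simp add: matrix_mul_assoc)
  also have "\<dots> = X ** A ** Y" using y2 by simp
  finally show ?thesis using X by simp
qed

lemma penrose_unitary: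
  fixes A :: "complex^'n^'m" and Q :: "complex^'m^'m"
  assumes q1: "ctrans Q ** Q = mat 1" and q2: "Q ** ctrans Q = mat 1" and p: "penrose A X"
  shows "penrose (Q ** A) (X ** ctrans Q)"
proof -
  have x1: "A ** X ** A = A" and x2: "X ** A ** X = X" and x3: "ctrans (A ** X) = A ** X"
    and x4: "ctrans (X ** A) = X ** A" using p unfolding penrose_def by auto
  have e1: "X ** ctrans Q ** (Q ** A) = X ** A"
    by (metis matrix_mul_assoc q1 matrix_mul_lid)
  have "Q ** A ** (X ** ctrans Q) ** (Q ** A) = Q ** (A ** X ** A)"
    using e1 by (metis matrix_mul_assoc)
  hence r1: "Q ** A ** (X ** ctrans Q) ** (Q ** A) = Q ** A" using x1 by simp
  have "X ** ctrans Q ** (Q ** A) ** (X ** ctrans Q) = (X ** A ** X) ** ctrans Q"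
    using e1 by (metis matrix_mul_assoc)
  hence r2: "X ** ctrans Q ** (Q ** A) ** (X ** ctrans Q) = X ** ctrans Q" using x2 by simp
  have "ctrans (Q ** A ** (X ** ctrans Q)) = ctrans (Q ** (A ** X) ** ctrans Q)"
    by (simp add: matrix_mul_assoc)
  also have "\<dots> = Q ** ctrans (A ** X) ** ctrans Q" by (simp add: ctrans_mult matrix_mul_assoc)
  also have "\<dots> = Q ** A ** (X ** ctrans Q)" using x3 by (simp add: matrix_mul_assoc)
  finally have r3: "ctrans (Q ** A ** (X ** ctrans Q)) = Q ** A ** (X ** ctrans Q)" .
  have r4: "ctrans (X ** ctrans Q ** (Q ** A)) = X ** ctrans Q ** (Q ** A)"
    using e1 x4 by simp
  show ?thesis unfolding penrose_def using r1 r2 r3 r4 by simp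
qed



lemma sum_bij_reindex: "bij (\<sigma>::'a::finite \<Rightarrow> 'a) \<Longrightarrow> (\<Sum>j\<in>UNIV. g (\<sigma> j)) = (\<Sum>j\<in>UNIV. g j)"
  using sum.reindex[of \<sigma> UNIV g] by (simp add: bij_is_inj bij_is_surj)

lemma frob_perm:
  fixes A B :: "complex^'n^'r::finite"
  assumes b: "bij \<sigma>" and m: "\<And>i. cmod (\<beta> i) = 1" and e: "\<And>i. A$i = \<beta> i *s B$(\<sigma> i)"
  shows "frob_sq A = frob_sq B"
proof -
  have "frob_sq A = (\<Sum>i\<in>UNIV. (\<lambda>i. \<Sum>j\<in>UNIV. (cmod (B $ i $ j))\<^sup>2) (\<sigma> i))"
    unfolding frob_sq_def e by (simp add: norm_mult m)
  also have "\<dots> = frob_sq B" unfolding frob_sq_def by (rule sum_bij_reindex[OF b])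
  finally show ?thesis .
qed

lemma frob_perm_col:
  fixes X :: "complex^'r::finite^'n" and P :: "complex^'r^'r"
  assumes b: "bij \<sigma>" and m: "\<And>i. cmod (\<beta> i) = 1" and P: "P = (\<chi> i j. if j = \<sigma> i then \<beta> i else 0)"
  shows "frob_sq (X ** ctrans P) = frob_sq X"
proof -
  have e: "(X ** ctrans P)$i$j = X$i$(\<sigma> j) * cnj (\<beta> j)" for i j
    unfolding matrix_matrix_mult_def ctrans_def P by (simp add: if_distrib cong: if_cong)
  have "frob_sq (X ** ctrans P) = (\<Sum>i\<in>UNIV. \<Sum>j\<in>UNIV. (\<lambda>j. (cmod (X $ i $ j))\<^sup>2) (\<sigma> j))"
    unfolding frob_sq_def e by (simp add: norm_mult m)
  also have "\<dots> = frob_sq X" unfolding frob_sq_def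
    by (rule sum.cong[OF refl], rule sum_bij_reindex[OF b, of "\<lambda>j. (cmod (X $ _ $ j))\<^sup>2"])
  finally show ?thesis .
qed



theorem lemma2p7:
  fixes T :: "'n::finite tensor3"
    and U V :: "complex ^ 'n ^ 'r::finite"
  assumes "symmetric_tensor T"
    and "r_diagonalisable CARD('r) T"
    and "clin_indep_family UNIV (\<lambda>i. U $ i)"
    and "T = (\<lambda>a b c. \<Sum>i\<in>UNIV. cube (U $ i) a b c)"
    and "clin_indep_family UNIV (\<lambda>i. V $ i)"
    and "T = (\<lambda>a b c. \<Sum>i\<in>UNIV. cube (V $ i) a b c)"
  shows "frob_sq U + frob_sq (pinv U) = frob_sq V + frob_sq (pinv V)"
proof -
  have eq: "(\<lambda>a b c. \<Sum>i\<in>UNIV. cube (U $ i) a b c) = (\<lambda>a b c. \<Sum>i\<in>UNIV. cube (V $ i) a b c)"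
    using assms(4) assms(6) by simp
  have Hp: "(\<Sum>i\<in>UNIV. cube (U $ i) a b c) = (\<Sum>i\<in>UNIV. cube (V $ i) a b c)" for a b c
    using fun_cong[OF fun_cong[OF fun_cong[OF eq]], of a b c] by simp
  obtain \<sigma> \<beta> where b: "bij \<sigma>" and m: "\<And>i. cmod (\<beta> i) = 1" and e: "\<And>i. U $ i = \<beta> i *s V $ (\<sigma> i)"
    using decomp_unique[OF assms(3) assms(5) Hp] by blast
  define P :: "complex^'r^'r" where "P = (\<chi> i j. if j = \<sigma> i then \<beta> i else 0)"
  have cb: "cnj (\<beta> k) * \<beta> k = 1" for k
    using complex_norm_square[of "\<beta> k"] m[of k] by (simp add: mult.commute)
  have bc: "\<beta> k * cnj (\<beta> k) = 1" for k using cb[of k] by (simp add: mult.commute)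
  have sinv: "(i = \<sigma> k) = (k = inv \<sigma> i)" for i k
    using b by (metis bij_inv_eq_iff)
  have sinv2: "\<sigma> (inv \<sigma> i) = i" for i using b by (simp add: bij_is_surj surj_f_inv_f)
  have UP: "U = P ** V"
    unfolding vec_eq_iff
    by (simp add: matrix_matrix_mult_def P_def e if01_mult cong: if_cong)
  have q1: "ctrans P ** P = mat 1"
    unfolding vec_eq_iff
    by (auto simp add: matrix_matrix_mult_def P_def ctrans_def mat_def if01_mult if_distrib[of cnj] sinv sinv2 cb cong: if_cong) (metis sinv2)
  have q2: "P ** ctrans P = mat 1"
    unfolding vec_eq_iff
    using b by (auto simp add: matrix_matrix_mult_def P_def ctrans_def mat_def if01_mult if_distrib[of cnj] bc bij_is_inj inj_eq cong: if_cong)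
  have VP: "V = ctrans P ** U"
    using UP q1 by (metis matrix_mul_assoc matrix_mul_lid)
  have f1: "frob_sq U = frob_sq V" by (rule frob_perm[OF b m e])
  have f2: "frob_sq (pinv U) = frob_sq (pinv V)"
  proof (cases "\<exists>X. penrose V X")
    case True
    then obtain X where X: "penrose V X" by blast
    have pV: "pinv V = X" unfolding pinv_def
      by (rule the_equality[of "penrose V", OF X]) (metis penrose_unique X)
    have pU0: "penrose U (X ** ctrans P)" using penrose_unitary[OF q1 q2 X] UP by simp
    have pU: "pinv U = X ** ctrans P" unfolding pinv_def
      by (rule the_equality[of "penrose U", OF pU0]) (metis penrose_unique pU0)
    show ?thesis using pU pV frob_perm_col[OF b m P_def] by simp
  next
    case False
    have "\<not> (\<exists>Y. penrose U Y)"
    proof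
      assume "\<exists>Y. penrose U Y"
      then obtain Y where Y: "penrose U Y" by blast
      have "penrose (ctrans P ** U) (Y ** ctrans (ctrans P))"
        by (rule penrose_unitary) (use q1 q2 Y in simp_all)
      thus False using False VP by auto
    qed
    hence "penrose U = penrose V" using False by (auto simp: fun_eq_iff)
    hence "pinv U = pinv V" unfolding pinv_def by simp
    thus ?thesis by simp
  qed
  show ?thesis using f1 f2 by simp
qed

end
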